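(* Let $v:(0,\infty)\to[0,\infty)$ be differentiable, set $\tilde v(\rho)=\rho\,v(\rho)$, and let $c_2\in\mathbb{R}$, $d>0$ be constants. Let $(\rho_s,\theta_s)$ with $\rho_s>0$ and $\tilde v(\rho_s)>0$ be an equilibrium state, and consider the linear system for $(\rho_\sigma,\theta_\sigma)(x,t)$, $x\in\mathbb{R}$, $$\partial_t\begin{pmatrix}\rho_\sigma\\ \theta_\sigma\end{pmatrix}+A_x(\rho_s,\theta_s)\,\partial_x\begin{pmatrix}\rho_\sigma\\ \theta_\sigma\end{pmatrix}=0,\qquad A_x(\rho,\theta)=\begin{pmatrix}\tilde v'(\rho)\cos\theta & -\tilde v(\rho)\sin\theta\\ -d\frac{\tilde v'(\rho)}{\rho}\sin\theta & c_2\frac{\tilde v(\rho)}{\rho}\cos\theta\end{pmatrix}.$$ Then this system is hyperbolic if $\tilde v'(\rho_s)\ge 0$, or if $$\tilde v'(\rho_s)<0\quad\text{and}\quad \frac{\left(\tilde v'(\rho_s)-c_2\frac{\tilde v(\rho_s)}{\rho_s}\right)^2}{-4d\,\frac{\tilde v'(\rho_s)\tilde v(\rho_s)}{\rho_s}}\ \ge\ \tan^2\theta_s .$$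
   Context: This system is the linearization (with viscosity $\gamma=0$), around a state depending only on $x$, of the two-dimensional Self-Organized Hydrodynamic model $\partial_t\rho+\nabla\cdot(v(\rho)\rho\Omega)=0$, $\rho[\partial_t\Omega+(c_2v(\rho)\Omega\cdot\nabla)\Omega]+d\,P_{\Omega^\perp}\nabla(v(\rho)\rho)=0$, $|\Omega|=1$, written with $\Omega=(\cos\theta,\sin\theta)$. Here "hyperbolic" means that the matrix $A_x(\rho_s,\theta_s)$ has two real eigenvalues. *)

theory Defs
  imports "HOL-Analysis.Derivative" "Jordan_Normal_Form.Char_Poly"
begin

definition vtilde :: "(real \<Rightarrow> real) \<Rightarrow> real \<Rightarrow> real" where
  "vtilde v \<rho> = \<rho> * v \<rho>"

definition A_x :: "(real \<Rightarrow> real) \<Rightarrow> real \<Rightarrow> real \<Rightarrow> real \<Rightarrow> real \<Rightarrow> real mat" where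
  "A_x v c2 d \<rho> \<theta> = mat_of_rows_list 2
     [[deriv (vtilde v) \<rho> * cos \<theta>, - vtilde v \<rho> * sin \<theta>],
      [- d * (deriv (vtilde v) \<rho> / \<rho>) * sin \<theta>, c2 * (vtilde v \<rho> / \<rho>) * cos \<theta>]]"

text \<open>Hyperbolic: the (2x2 real) matrix has two real eigenvalues (counted with
  multiplicity), i.e. its characteristic polynomial splits into real linear factors.\<close>
definition hyperbolic :: "real mat \<Rightarrow> bool" where
  "hyperbolic A \<longleftrightarrow> (\<exists>l1 l2 :: real. char_poly A = [:-l1, 1:] * [:-l2, 1:])"

end

theory Submission imports Defs begin
lemma det2: fixes A :: "'a::comm_ring_1 mat"
  assumes A: "A \<in> carrier_mat 2 2"
  shows "det A = A$$(0,0)*A$$(1,1) - A$$(0,1)*A$$(1,0)"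
proof -
  have c: "mat_delete A i j \<in> carrier_mat 1 1" for i j
    using mat_delete_carrier[OF A, of i j] by simp
  have d: "det (mat_delete A i j) = mat_delete A i j $$ (0,0)" for i j
    by (rule det_single[OF c])
  have e00: "mat_delete A 0 0 $$ (0,0) = A $$ (1,1)"
    using A unfolding mat_delete_def by simp
  have e01: "mat_delete A 0 1 $$ (0,0) = A $$ (1,0)"
    using A unfolding mat_delete_def by simp
  have "det A = (\<Sum>j<2. A $$ (0,j) * cofactor A 0 j)" by (rule laplace_expansion_row[OF A]) simp
  also have "\<dots> = A $$ (0,0) * cofactor A 0 0 + A $$ (0,1) * cofactor A 0 1"
    by (simp add: numeral_2_eq_2)
  also have "\<dots> = A$$(0,0)*A$$(1,1) - A$$(0,1)*A$$(1,0)"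
    unfolding cofactor_def d e00 e01 by simp
  finally show ?thesis .
qed
lemma L0: "length [[p,q],[r,w::real]] = 2" by simp
lemma L1: "mat_of_rows_list 2 [[p,q],[r,w::real]] \<in> carrier_mat 2 2"
    unfolding mat_of_rows_list_def L0 by (rule mat_carrier)
lemma E: "mat_of_rows_list 2 [[p,q],[r,w::real]] = mat 2 2 (\<lambda>(i,j). [[p,q],[r,w]]!i!j)"
    unfolding mat_of_rows_list_def L0 ..
lemma m00: "char_poly_matrix (mat_of_rows_list 2 [[p,q],[r,w::real]]) $$ (0,0) = [:-p,1:]"
  unfolding E char_poly_matrix_def by simp
lemma m11: "char_poly_matrix (mat_of_rows_list 2 [[p,q],[r,w::real]]) $$ (1,1) = [:-w,1:]"
  unfolding E char_poly_matrix_def by simp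
lemma m01: "char_poly_matrix (mat_of_rows_list 2 [[p,q],[r,w::real]]) $$ (0,1) = [:-q:]"
  unfolding E char_poly_matrix_def by simp
lemma m10: "char_poly_matrix (mat_of_rows_list 2 [[p,q],[r,w::real]]) $$ (1,0) = [:-r:]"
  unfolding E char_poly_matrix_def by simp
lemma P: "[:-p,1:] * [:-w,1:] - [:-q:] * [:-r:] = [:p*w - q*r, -(p+w), 1::real:]"
  by (simp add: algebra_simps)

lemma cp2: fixes p q r w :: real
  shows "char_poly (mat_of_rows_list 2 [[p,q],[r,w]]) = [:p*w - q*r, -(p+w), 1:]"
  unfolding char_poly_def det2[OF char_poly_matrix_closed[OF L1]] m00 m11 m01 m10 P ..

lemma split2: fixes T D :: real assumes "T^2 - 4*D \<ge> 0"
  shows "\<exists>l1 l2. [:D, -T, 1:] = [:-l1, 1:] * [:-l2, 1:]"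
proof -
  define s where "s = sqrt (T^2 - 4*D)"
  have s2: "s^2 = T^2 - 4*D" using assms s_def by simp
  have e: "(T+s)/2 * ((T-s)/2) = D" using s2 by (simp add: field_simps power2_eq_square)
  have "[:-((T+s)/2), 1:] * [:-((T-s)/2), 1:] = [:(T+s)/2 * ((T-s)/2), -((T+s)/2) - (T-s)/2, 1:]"
    by (simp add: algebra_simps)
  also have "\<dots> = [:D, -T, 1:]" unfolding e by (simp add: field_simps)
  finally show ?thesis by metis
qed

theorem mainTheorem1:
  fixes v :: "real \<Rightarrow> real" and c2 d \<rho>s \<theta>s :: real
  assumes v_diff: "\<And>\<rho>. \<rho> > 0 \<Longrightarrow> v differentiable (at \<rho>)"
    and v_nonneg: "\<And>\<rho>. \<rho> > 0 \<Longrightarrow> v \<rho> \<ge> 0"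
    and d_pos: "d > 0"
    and rho_pos: "\<rho>s > 0"
    and vt_pos: "vtilde v \<rho>s > 0"
    and cond: "deriv (vtilde v) \<rho>s \<ge> 0 \<or>
      (deriv (vtilde v) \<rho>s < 0 \<and> cos \<theta>s \<noteq> 0 \<and>
       (deriv (vtilde v) \<rho>s - c2 * vtilde v \<rho>s / \<rho>s)\<^sup>2
         / (- 4 * d * deriv (vtilde v) \<rho>s * vtilde v \<rho>s / \<rho>s) \<ge> (tan \<theta>s)\<^sup>2)"
  shows "hyperbolic (A_x v c2 d \<rho>s \<theta>s)"
proof -
  define a where "a = deriv (vtilde v) \<rho>s"
  define b where "b = vtilde v \<rho>s"
  define p where "p = a * cos \<theta>s"
  define q where "q = - b * sin \<theta>s"
  define r where "r = - d * (a / \<rho>s) * sin \<theta>s"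
  define w where "w = c2 * (b / \<rho>s) * cos \<theta>s"
  have A: "A_x v c2 d \<rho>s \<theta>s = mat_of_rows_list 2 [[p,q],[r,w]]"
    unfolding A_x_def p_def q_def r_def w_def a_def b_def by simp
  have b0: "b > 0" using vt_pos b_def by simp
  have qr: "q * r = d * a * b / \<rho>s * (sin \<theta>s)^2"
    unfolding q_def r_def by (simp add: power2_eq_square)
  have pw: "(p - w)^2 = (a - c2 * b / \<rho>s)^2 * (cos \<theta>s)^2"
    unfolding p_def w_def by (simp add: power2_eq_square algebra_simps)
  have disc: "(p+w)^2 - 4*(p*w - q*r) \<ge> 0"
  proof -
    have e: "(p+w)^2 - 4*(p*w - q*r) = (p - w)^2 + 4 * (q*r)" by (simp add: power2_eq_square algebra_simps)
    show ?thesis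
    proof (cases "a \<ge> 0")
      case True
      have "q*r \<ge> 0" unfolding qr using True b0 d_pos rho_pos by (intro mult_nonneg_nonneg divide_nonneg_pos) auto
      then show ?thesis unfolding e by simp
    next
      case False
      have cc: "cos \<theta>s \<noteq> 0 \<and> (a - c2 * b / \<rho>s)\<^sup>2 / (- 4 * d * a * b / \<rho>s) \<ge> (tan \<theta>s)\<^sup>2"
        using cond False unfolding a_def b_def by blast
      then have c0: "cos \<theta>s \<noteq> 0" and
        c: "(a - c2 * b / \<rho>s)\<^sup>2 / (- 4 * d * a * b / \<rho>s) \<ge> (tan \<theta>s)\<^sup>2" by blast+
      define Y where "Y = - 4 * d * a * b / \<rho>s"
      have Y0: "Y > 0"
      proof -
        have "d * b > 0" using b0 d_pos by simp
        hence "4 * d * a * b < 0" using False mult_neg_pos[of a "d*b"] by (simp add: mult.commute mult.left_commute)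
        hence "4 * d * a * b / \<rho>s < 0" using rho_pos by (simp add: divide_neg_pos)
        thus ?thesis unfolding Y_def by simp
      qed
      have X: "(a - c2 * b / \<rho>s)\<^sup>2 \<ge> Y * (tan \<theta>s)\<^sup>2"
      proof -
        have "(tan \<theta>s)\<^sup>2 * Y \<le> (a - c2 * b / \<rho>s)\<^sup>2"
          using c unfolding Y_def[symmetric] pos_le_divide_eq[OF Y0] .
        then show ?thesis by (simp only: mult.commute)
      qed
      have t: "(tan \<theta>s)\<^sup>2 * (cos \<theta>s)\<^sup>2 = (sin \<theta>s)^2"
        using c0 by (simp add: tan_def power_divide)
      have "(p - w)^2 + 4 * (q*r) = (cos \<theta>s)^2 * ((a - c2 * b / \<rho>s)^2 - Y * (tan \<theta>s)\<^sup>2)"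
      proof -
        have Ys: "Y * (sin \<theta>s)^2 = - 4 * (q*r)" unfolding qr Y_def by simp
        have "(cos \<theta>s)^2 * ((a - c2 * b / \<rho>s)^2 - Y * (tan \<theta>s)\<^sup>2)
              = (a - c2 * b / \<rho>s)^2 * (cos \<theta>s)^2 - Y * ((tan \<theta>s)\<^sup>2 * (cos \<theta>s)\<^sup>2)"
          by (simp only: right_diff_distrib mult.commute mult.left_commute)
        also have "\<dots> = (p - w)^2 + 4 * (q*r)" unfolding t Ys pw by simp
        finally show ?thesis by simp
      qed
      also have "\<dots> \<ge> 0" using X by simp
      finally show ?thesis unfolding e .
    qed
  qed
  show ?thesis unfolding hyperbolic_def A cp2 by (rule split2[OF disc])
qed
end
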